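(* Let $k,r\in\mathbb N$ with $r\ge2$, and let $H_1,\dots,H_r$ be graphs, $\mathbf H=(H_i)_{i\in[r]}$. Then $\mathcal B(\mathbf H)\subset\mathcal B'(\mathbf H)$.
   Context: Constants: $\delta=r^{-50}$, $p=\frac1{2^{25}k^2r^4}$. Hypergraphs are identified with their edge sets; $\mathcal G[S]=\{E\in\mathcal G:E\subset S\}$. For $\nu:\mathcal G\to\mathbb R_{\ge0}$: $e(\nu)=\sum_E\nu(E)$, $d_\nu(L)=\sum_{E\in\mathcal G,L\subset E}\nu(E)$, $\Lambda_p(\nu)=\sum_{L\subset V(\mathcal G),|L|\ge2}d_\nu(L)^2p^{-|L|}$. For $R>0$, $\mathcal G$ is $(p,R)$-Janson if some $\nu:\mathcal G\to\mathbb R_{\ge0}$ has $\Lambda_p(\nu)<e(\nu)^2/R$. For graphs $F,G$ and $G'\subset G$, $\mathfrak I_{F,G',G}$ is the hypergraph on $V(G)$ whose edges are the sets $L\subset V(G)$ with $G'[L]=G[L]\cong F$. For a colouring $c$ of edges with colours in $[r]$, $G_i$ is the subgraph of edges of colour $i$. $\mathcal B(\mathbf H)$ is the family of graphs $G$ for which some colouring $c:E(G)\to[r]$ makes $\mathfrak I_{H_i,G_i,G}$ not $(p,p\,v(G))$-Janson for every $i\in[r]$. $\mathcal B'(\mathbf H)$ is the family of graphs $G$ for which there exist $S\subset V(G)$ with $|S|\ge\delta^{2/3}v(G)$ and a colouring $c:E(G[S])\to[r]$ such that $\mathfrak I_{H_i,G_i,G}[S]$ is not $(p,2^{-9}r^{-1}\delta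 p\,v(G))$-Janson for every $i\in[r]$. *)

theory Defs
  imports Complex_Main
begin

type_synonym 'a graph = "'a set \<times> 'a set set"

definition V :: "'a graph \<Rightarrow> 'a set" where "V G = fst G"
definition E :: "'a graph \<Rightarrow> 'a set set" where "E G = snd G"

definition wf_graph :: "'a graph \<Rightarrow> bool" where
  "wf_graph G \<longleftrightarrow> finite (V G) \<and> E G \<subseteq> {e. e \<subseteq> V G \<and> card e = 2}"

definition vnum :: "'a graph \<Rightarrow> real" where "vnum G = real (card (V G))"

definition induced :: "'a graph \<Rightarrow> 'a set \<Rightarrow> 'a graph" where
  "induced G L = (L, {e \<in> E G. e \<subseteq> L})"

definition graph_iso :: "'b graph \<Rightarrow> 'a graph \<Rightarrow> bool" where
  "graph_iso F G \<longleftrightarrow> (\<exists>f. bij_betw f (V F) (V G) \<and>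
      (\<forall>u\<in>V F. \<forall>v\<in>V F. {u, v} \<in> E F \<longleftrightarrow> {f u, f v} \<in> E G))"

text \<open>Hypergraphs are identified with their edge sets; the vertex set is passed explicitly.\<close>
definition hg_restrict :: "'a set set \<Rightarrow> 'a set \<Rightarrow> 'a set set" where
  "hg_restrict \<G> S = {X \<in> \<G>. X \<subseteq> S}"

definition e_nu :: "'a set set \<Rightarrow> ('a set \<Rightarrow> real) \<Rightarrow> real" where
  "e_nu \<G> \<nu> = (\<Sum>X\<in>\<G>. \<nu> X)"

definition deg_nu :: "'a set set \<Rightarrow> ('a set \<Rightarrow> real) \<Rightarrow> 'a set \<Rightarrow> real" where
  "deg_nu \<G> \<nu> L = (\<Sum>X\<in>{X \<in> \<G>. L \<subseteq> X}. \<nu> X)"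

definition Lambda :: "'a set \<Rightarrow> 'a set set \<Rightarrow> real \<Rightarrow> ('a set \<Rightarrow> real) \<Rightarrow> real" where
  "Lambda Vs \<G> p \<nu> = (\<Sum>L\<in>{L. L \<subseteq> Vs \<and> card L \<ge> 2}. (deg_nu \<G> \<nu> L)^2 * (1/p) ^ card L)"

definition janson :: "'a set \<Rightarrow> 'a set set \<Rightarrow> real \<Rightarrow> real \<Rightarrow> bool" where
  "janson Vs \<G> p R \<longleftrightarrow> (\<exists>\<nu>::'a set \<Rightarrow> real. (\<forall>X\<in>\<G>. \<nu> X \<ge> 0) \<and>
      Lambda Vs \<G> p \<nu> < (e_nu \<G> \<nu>)^2 / R)"

definition Ihg :: "'b graph \<Rightarrow> 'a graph \<Rightarrow> 'a graph \<Rightarrow> 'a set set" where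
  "Ihg F G' G = {L. L \<subseteq> V G \<and> induced G' L = induced G L \<and> graph_iso F (induced G L)}"

definition colour_class :: "'a graph \<Rightarrow> 'a set set \<Rightarrow> ('a set \<Rightarrow> nat) \<Rightarrow> nat \<Rightarrow> 'a graph" where
  "colour_class G Es c i = (V G, {e \<in> Es. c e = i})"

definition pconst :: "nat \<Rightarrow> nat \<Rightarrow> real" where
  "pconst k r = 1 / (2^25 * real k ^ 2 * real r ^ 4)"

definition delta :: "nat \<Rightarrow> real" where
  "delta r = real r powr (-50)"

definition Bfam :: "nat \<Rightarrow> nat \<Rightarrow> (nat \<Rightarrow> 'b graph) \<Rightarrow> 'a graph set" where
  "Bfam k r H = {G. wf_graph G \<and> (\<exists>c::'a set \<Rightarrow> nat. (\<forall>e\<in>E G. c e \<in> {1..r}) \<and>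
      (\<forall>i\<in>{1..r}. \<not> janson (V G) (Ihg (H i) (colour_class G (E G) c i) G)
                     (pconst k r) (pconst k r * vnum G)))}"

definition Bfam' :: "nat \<Rightarrow> nat \<Rightarrow> (nat \<Rightarrow> 'b graph) \<Rightarrow> 'a graph set" where
  "Bfam' k r H = {G. wf_graph G \<and> (\<exists>S. S \<subseteq> V G \<and> real (card S) \<ge> delta r powr (2/3) * vnum G \<and>
      (\<exists>c::'a set \<Rightarrow> nat. (\<forall>e\<in>E (induced G S). c e \<in> {1..r}) \<and>
      (\<forall>i\<in>{1..r}. \<not> janson (V G)
           (hg_restrict (Ihg (H i) (colour_class G (E (induced G S)) c i) G) S)
           (pconst k r) (2 powr (-9) / real r * delta r * pconst k r * vnum G))))}"

end

theory Submission
  imports Defs "HOL-Analysis.Convex"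
begin

lemma Lambda_nonneg: "p > 0 \<Longrightarrow> Lambda Vs J p \<nu> \<ge> 0"
  unfolding Lambda_def by (intro sum_nonneg mult_nonneg_nonneg) auto

lemma not_janson_nonpos: "p > 0 \<Longrightarrow> R \<le> 0 \<Longrightarrow> \<not> janson Vs J p R"
proof
  assume "p > 0" "R \<le> 0" "janson Vs J p R"
  then obtain \<nu> where "Lambda Vs J p \<nu> < (e_nu J \<nu>)^2 / R" unfolding janson_def by blast
  moreover have "(e_nu J \<nu>)^2 / R \<le> 0" using `R \<le> 0` by (simp add: divide_nonneg_nonpos)
  ultimately show False using Lambda_nonneg[OF `p > 0`, of Vs J \<nu>] by linarith
qed

lemma janson_norm:
  assumes "janson Vs J p R" "p > 0"
  shows "\<exists>\<nu>. (\<forall>X. 0 \<le> \<nu> X) \<and> (\<forall>X. X \<notin> J \<longrightarrow> \<nu> X = 0) \<and> e_nu J \<nu> = 1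
     \<and> Lambda Vs J p \<nu> < 1 / R"
proof -
  obtain \<nu>0 where nn: "\<forall>X\<in>J. \<nu>0 X \<ge> 0" and lt: "Lambda Vs J p \<nu>0 < (e_nu J \<nu>0)^2 / R"
    using assms(1) unfolding janson_def by blast
  define e where "e = e_nu J \<nu>0"
  have R: "R > 0" using not_janson_nonpos[OF assms(2)] assms(1) by (meson not_le)
  have "e \<ge> 0" unfolding e_def e_nu_def using nn by (simp add: sum_nonneg)
  moreover have "e \<noteq> 0" using lt Lambda_nonneg[OF assms(2), of Vs J \<nu>0] unfolding e_def by auto
  ultimately have e: "e > 0" by simp
  define \<nu> where "\<nu> X = (if X \<in> J then \<nu>0 X / e else 0)" for X
  have "e_nu J \<nu> = (\<Sum>X\<in>J. \<nu>0 X / e)" unfolding e_nu_def \<nu>_def by simp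
  also have "\<dots> = 1" using e by (simp add: sum_divide_distrib[symmetric] e_def e_nu_def)
  finally have e1: "e_nu J \<nu> = 1" .
  have d: "deg_nu J \<nu> L = deg_nu J \<nu>0 L / e" for L
    unfolding deg_nu_def \<nu>_def by (simp add: sum_divide_distrib)
  have "Lambda Vs J p \<nu> = Lambda Vs J p \<nu>0 / e^2"
    unfolding Lambda_def d by (simp add: sum_divide_distrib power_divide mult.commute)
  also have "\<dots> < ((e_nu J \<nu>0)^2 / R) / e^2"
    using lt e by (intro divide_strict_right_mono) auto
  also have "\<dots> = 1 / R" using e by (simp add: e_def)
  finally show ?thesis using e1 nn e by (intro exI[of _ \<nu>]) (auto simp: \<nu>_def)
qed

lemma restrict_eq:
  assumes "J' \<subseteq> J" "finite J" "\<forall>X. X \<notin> J' \<longrightarrow> \<nu> X = 0"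
  shows "e_nu J \<nu> = e_nu J' \<nu>" "deg_nu J \<nu> L = deg_nu J' \<nu> L" "Lambda Vs J p \<nu> = Lambda Vs J' p \<nu>"
proof -
  show "e_nu J \<nu> = e_nu J' \<nu>" unfolding e_nu_def
    by (rule sum.mono_neutral_right) (use assms in auto)
  have "deg_nu J \<nu> L = deg_nu J' \<nu> L" for L unfolding deg_nu_def
    by (rule sum.mono_neutral_right) (use assms in auto)
  then show "deg_nu J \<nu> L = deg_nu J' \<nu> L" "Lambda Vs J p \<nu> = Lambda Vs J' p \<nu>"
    unfolding Lambda_def by auto
qed

lemma count_bound:
  fixes J A :: "'a set set"
  assumes fV: "finite Vs" and JV: "J \<subseteq> Pow Vs" and p: "p > 0" and R: "R > 0"
    and nj: "\<not> janson Vs J p R"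
    and AV: "A \<subseteq> Pow Vs"
    and jA: "\<forall>S\<in>A. janson Vs (hg_restrict J S) p R'"
    and M: "\<forall>L. L \<subseteq> Vs \<and> card L \<ge> 2 \<longrightarrow> real (card {S\<in>A. L \<subseteq> S}) \<le> M"
    and M0: "M \<ge> 0"
  shows "real (card A) * R' \<le> M * R"
proof (cases "A = {}")
  case True then show ?thesis using M0 R by simp
next
  case False
  have fJ: "finite J" using JV fV by (meson finite_Pow_iff finite_subset)
  have fA: "finite A" using AV fV by (meson finite_Pow_iff finite_subset)
  have "\<forall>S\<in>A. \<exists>\<nu>. (\<forall>X. 0 \<le> \<nu> X) \<and> (\<forall>X. X \<notin> hg_restrict J S \<longrightarrow> \<nu> X = 0)
       \<and> e_nu (hg_restrict J S) \<nu> = 1 \<and> Lambda Vs (hg_restrict J S) p \<nu> < 1 / R'"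
    using jA janson_norm[OF _ p] by blast
  then obtain \<mu> where \<mu>: "\<And>S. S \<in> A \<Longrightarrow> (\<forall>X. 0 \<le> \<mu> S X) \<and> (\<forall>X. X \<notin> hg_restrict J S \<longrightarrow> \<mu> S X = 0)
       \<and> e_nu (hg_restrict J S) (\<mu> S) = 1 \<and> Lambda Vs (hg_restrict J S) p (\<mu> S) < 1 / R'"
    by metis
  have sub: "hg_restrict J S \<subseteq> J" for S unfolding hg_restrict_def by auto
  have eS: "e_nu J (\<mu> S) = 1" and LS: "Lambda Vs J p (\<mu> S) < 1 / R'"
    and dS: "deg_nu J (\<mu> S) L = deg_nu (hg_restrict J S) (\<mu> S) L"
    and nnS: "\<And>X. 0 \<le> \<mu> S X" if "S \<in> A" for S L
    using restrict_eq[OF sub[of S] fJ, where \<nu>="\<mu> S"] \<mu>[OF that] by auto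
  have d0: "deg_nu J (\<mu> S) L = 0" if "S \<in> A" "\<not> L \<subseteq> S" for S L
    using that dS[OF that(1)] unfolding deg_nu_def hg_restrict_def
    by (metis (no_types, lifting) dual_order.trans empty_Collect_eq mem_Collect_eq sum.empty)
  have dnn: "deg_nu J (\<mu> S) L \<ge> 0" if "S \<in> A" for S L
    unfolding deg_nu_def using nnS[OF that] by (simp add: sum_nonneg)
  define \<nu> where "\<nu> X = (\<Sum>S\<in>A. \<mu> S X)" for X
  have \<nu>nn: "\<forall>X\<in>J. \<nu> X \<ge> 0" unfolding \<nu>_def using nnS by (simp add: sum_nonneg)
  have "e_nu J \<nu> = (\<Sum>S\<in>A. e_nu J (\<mu> S))" unfolding e_nu_def \<nu>_def by (rule sum.swap)
  also have "\<dots> = real (card A)" using eS by simp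
  finally have eA: "e_nu J \<nu> = real (card A)" .
  have dsum: "deg_nu J \<nu> L = (\<Sum>S\<in>A. deg_nu J (\<mu> S) L)" for L
    unfolding deg_nu_def \<nu>_def by (rule sum.swap)
  define w where "w L = (1/p) ^ card L" for L :: "'a set"
  have w0: "w L \<ge> 0" for L unfolding w_def using p by simp
  define Ls where "Ls = {L. L \<subseteq> Vs \<and> card L \<ge> 2}"
  have key: "(deg_nu J \<nu> L)^2 \<le> M * (\<Sum>S\<in>A. (deg_nu J (\<mu> S) L)^2)" if "L \<in> Ls" for L
  proof -
    define AL where "AL = {S\<in>A. L \<subseteq> S}"
    have fAL: "finite AL" using fA unfolding AL_def by auto
    have "deg_nu J \<nu> L = (\<Sum>S\<in>AL. deg_nu J (\<mu> S) L)" unfolding dsum AL_def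
      using d0 fA by (intro sum.mono_neutral_right) (auto simp: AL_def)
    then have "(deg_nu J \<nu> L)^2 \<le> (\<Sum>S\<in>AL. (deg_nu J (\<mu> S) L)^2) * card AL"
      using sum_squared_le_sum_of_squares by metis
    also have "\<dots> \<le> (\<Sum>S\<in>A. (deg_nu J (\<mu> S) L)^2) * M"
    proof (rule mult_mono)
      show "(\<Sum>S\<in>AL. (deg_nu J (\<mu> S) L)^2) \<le> (\<Sum>S\<in>A. (deg_nu J (\<mu> S) L)^2)"
        by (rule sum_mono2) (use fA AL_def in auto)
      show "real (card AL) \<le> M" using M that unfolding AL_def Ls_def by auto
    qed (auto simp: sum_nonneg M0)
    finally show ?thesis by (simp add: mult.commute)
  qed
  have "real (card A)^2 / R \<le> Lambda Vs J p \<nu>"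
    using nj \<nu>nn eA unfolding janson_def by (metis not_less)
  also have "Lambda Vs J p \<nu> = (\<Sum>L\<in>Ls. (deg_nu J \<nu> L)^2 * w L)"
    unfolding Lambda_def Ls_def w_def by simp
  also have "\<dots> \<le> (\<Sum>L\<in>Ls. M * (\<Sum>S\<in>A. (deg_nu J (\<mu> S) L)^2) * w L)"
    by (rule sum_mono) (use key w0 in \<open>auto intro: mult_right_mono\<close>)
  also have "\<dots> = M * (\<Sum>S\<in>A. (\<Sum>L\<in>Ls. (deg_nu J (\<mu> S) L)^2 * w L))"
    by (simp add: sum_distrib_left sum_distrib_right mult.assoc sum.swap[of _ Ls A])
  also have "\<dots> = M * (\<Sum>S\<in>A. Lambda Vs J p (\<mu> S))"
    unfolding Lambda_def Ls_def w_def by simp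
  also have "\<dots> \<le> M * (\<Sum>S\<in>A. 1 / R')"
    by (intro mult_left_mono sum_mono) (use LS M0 in \<open>auto intro: less_imp_le\<close>)
  also have "\<dots> = M * real (card A) / R'" by simp
  finally have ineq: "real (card A)^2 / R \<le> M * real (card A) / R'" .
  have cA: "real (card A) > 0" using False fA by (simp add: card_gt_0_iff)
  have R': "R' > 0" using jA False not_janson_nonpos[OF p] by (meson all_not_in_conv not_le)
  from ineq have "real (card A)^2 * R' \<le> M * real (card A) * R"
    using R R' by (simp add: field_simps)
  then have "real (card A) * (real (card A) * R') \<le> real (card A) * (M * R)"
    by (simp add: power2_eq_square algebra_simps)
  then show ?thesis using cA by simp
qed

lemma count_pair:
  assumes fV: "finite Vs" and PV: "P \<subseteq> Vs" and P2: "card P = 2" and s2: "s \<ge> 2"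
  shows "card {S. S \<subseteq> Vs \<and> card S = s \<and> P \<subseteq> S} \<le> (card Vs - 2) choose (s - 2)"
proof -
  have fP: "finite P" using PV fV finite_subset by blast
  have "card {S. S \<subseteq> Vs \<and> card S = s \<and> P \<subseteq> S} \<le> card {T. T \<subseteq> Vs - P \<and> card T = s - 2}"
  proof (rule card_inj_on_le[where f="\<lambda>S. S - P"])
    show "inj_on (\<lambda>S. S - P) {S. S \<subseteq> Vs \<and> card S = s \<and> P \<subseteq> S}"
      by (rule inj_onI) blast
    show "(\<lambda>S. S - P) ` {S. S \<subseteq> Vs \<and> card S = s \<and> P \<subseteq> S} \<subseteq> {T. T \<subseteq> Vs - P \<and> card T = s - 2}"
      using P2 fP fV by (auto simp: card_Diff_subset intro: finite_subset)
    show "finite {T. T \<subseteq> Vs - P \<and> card T = s - 2}" using fV by simp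
  qed
  also have "\<dots> = card (Vs - P) choose (s - 2)" using fV by (simp add: n_subsets)
  also have "card (Vs - P) = card Vs - 2" using PV P2 fP by (simp add: card_Diff_subset)
  finally show ?thesis .
qed

lemma choose_ratio:
  assumes "2 \<le> s" "s \<le> v"
  shows "real ((v - 2) choose (s - 2)) = real (v choose s) * (real s * (real s - 1)) / (real v * (real v - 1))"
proof -
  have "(v choose s) * (s choose 2) = (v choose 2) * ((v - 2) choose (s - 2))"
    using choose_mult[of 2 s v] assms by simp
  moreover have "real (n choose 2) = real n * (real n - 1) / 2" for n
  proof (cases "n \<ge> 2")
    case True
    have "even (n * (n - 1))" by (cases "even n") auto
    then have "real (n * (n - 1) div 2) = real (n * (n - 1)) / 2" by (simp add: real_of_nat_div)
    then show ?thesis using True by (simp add: choose_two of_nat_diff)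
  next
    case False then have "n = 0 \<or> n = 1" by auto
    then show ?thesis by auto
  qed
  ultimately have "real (v choose s) * (real s * (real s - 1) / 2) = real v * (real v - 1) / 2 * real ((v - 2) choose (s - 2))"
    by (metis of_nat_mult)
  then have e2: "real ((v - 2) choose (s - 2)) * (real v * (real v - 1)) = real (v choose s) * (real s * (real s - 1))"
    by (simp add: field_simps)
  moreover have "real v * (real v - 1) > 0" using assms by simp
  ultimately show ?thesis by (metis nonzero_eq_divide_eq less_irrefl)
qed

lemma count_L:
  assumes fV: "finite Vs" and LV: "L \<subseteq> Vs" and L2: "card L \<ge> 2" and sv: "s \<le> card Vs"
  shows "real (card {S. S \<subseteq> Vs \<and> card S = s \<and> L \<subseteq> S})
     \<le> real (card Vs choose s) * (real s * (real s - 1)) / (real (card Vs) * (real (card Vs) - 1))"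
proof (cases "s \<ge> 2")
  case False
  have fL: "finite L" using LV fV finite_subset by blast
  have "{S. S \<subseteq> Vs \<and> card S = s \<and> L \<subseteq> S} = {}"
  proof (safe)
    fix S assume "S \<subseteq> Vs" "L \<subseteq> S" "s = card S"
    then have "card L \<le> card S" using fV by (meson card_mono finite_subset)
    then show "S \<in> {}" using False L2 `s = card S` by simp
  qed
  moreover have "real s * (real s - 1) = 0" using False by (cases s) auto
  ultimately show ?thesis by (simp only: card.empty of_nat_0 mult_zero_right mult_zero_left div_0)
next
  case True
  obtain P where P: "P \<subseteq> L" "card P = 2" using L2 obtain_subset_with_card_n by metis
  have "card {S. S \<subseteq> Vs \<and> card S = s \<and> L \<subseteq> S} \<le> card {S. S \<subseteq> Vs \<and> card S = s \<and> P \<subseteq> S}"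
    by (rule card_mono) (use fV P in auto)
  also have "\<dots> \<le> (card Vs - 2) choose (s - 2)"
    by (rule count_pair) (use fV P LV True in auto)
  finally have "real (card {S. S \<subseteq> Vs \<and> card S = s \<and> L \<subseteq> S}) \<le> real ((card Vs - 2) choose (s - 2))"
    by linarith
  then show ?thesis using choose_ratio[OF True sv] by simp
qed

lemma restr_colour:
  assumes "S \<subseteq> V G"
  shows "hg_restrict (Ihg F (colour_class G (E (induced G S)) c i) G) S
       = hg_restrict (Ihg F (colour_class G (E G) c i) G) S"
proof -
  have "induced (colour_class G (E (induced G S)) c i) L = induced (colour_class G (E G) c i) L"
    if "L \<subseteq> S" for L
    using that unfolding induced_def colour_class_def E_def by auto
  then show ?thesis unfolding hg_restrict_def Ihg_def by auto
qed

lemma x_facts: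
  assumes r: "r \<ge> (2::nat)"
  defines "x \<equiv> real r powr (-50/3)"
  shows "x > 0" "delta r = x^3" "delta r powr (2/3) = x^2" "x^2 \<le> 1" "real r^2 * 2^11 * x \<le> 1"
proof -
  have r1: "real r \<ge> 2" using r by simp
  show x0: "x > 0" unfolding x_def using r1 by simp
  have "x^3 = x powr 3" using powr_realpow[OF x0, of 3] by simp
  also have "\<dots> = real r powr (-50)" unfolding x_def by (simp add: powr_powr)
  finally show "delta r = x^3" unfolding delta_def by simp
  have "x^2 = x powr 2" using powr_realpow[OF x0, of 2] by simp
  also have "\<dots> = real r powr (-100/3)" unfolding x_def by (simp add: powr_powr)
  also have "\<dots> = delta r powr (2/3)" unfolding delta_def by (simp add: powr_powr)
  finally show x2: "delta r powr (2/3) = x^2" by simp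
  have "x \<le> real r powr (-13)" unfolding x_def using r1 by (intro powr_mono) auto
  also have "real r powr (-13) = 1 / real r ^ 13"
    using r1 by (simp add: powr_minus powr_realpow[of "real r" 13] divide_inverse)
  finally have xle: "x \<le> 1 / real r ^ 13" .
  have "x \<le> 1" using xle r1 by (smt (verit) divide_le_eq_1 one_le_power)
  then show "x^2 \<le> 1" using x0 by (simp add: power_le_one)
  have "real r^2 * 2^11 * x \<le> real r^2 * 2^11 * (1 / real r ^ 13)"
    using xle r1 by (intro mult_left_mono) auto
  also have "\<dots> = 2^11 / real r ^ 11" using r1 by (simp add: field_simps power_add[symmetric] eval_nat_numeral)
  also have "\<dots> \<le> 1"
  proof -
    have "(2::real)^11 \<le> real r ^ 11" using r1 by (intro power_mono) auto
    then show ?thesis using r1 by simp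
  qed
  finally show "real r^2 * 2^11 * x \<le> 1" .
qed

lemma rho_bound:
  fixes x :: real and s v :: nat
  assumes s2: "s \<ge> 2" and sv: "s \<le> v" and x0: "x > 0" and slt: "real s < x^2 * real v + 1"
  shows "real s * (real s - 1) / (real v * (real v - 1)) < 4 * x^4"
proof -
  have a: "real s - 1 < x^2 * real v" using slt by simp
  have b: "real s \<le> 2 * (real s - 1)" using s2 by simp
  have s1: "real s - 1 > 0" using s2 by simp
  have "real s * (real s - 1) \<le> 2 * (real s - 1) * (real s - 1)" using b s1 by (intro mult_right_mono) auto
  also have "\<dots> < 2 * (x^2 * real v) * (x^2 * real v)"
  proof (rule mult_strict_mono)
    show "2 * (real s - 1) < 2 * (x^2 * real v)" using a by simp
    show "real s - 1 < x^2 * real v" using a .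
    show "0 < 2 * (x^2 * real v)" using a s1 by simp
    show "0 \<le> real s - 1" using s1 by simp
  qed
  finally have c: "real s * (real s - 1) < 2 * x^4 * real v ^ 2" by (simp add: power2_eq_square eval_nat_numeral mult_ac)
  have v2: "real v \<ge> 2" using s2 sv by simp
  have "real v * 2 \<le> real v * real v" using v2 by (intro mult_left_mono) auto
  then have d: "real v * (real v - 1) \<ge> real v ^ 2 / 2" by (simp add: power2_eq_square algebra_simps)
  have dpos: "real v ^ 2 / 2 > 0" using v2 by simp
  have "real s * (real s - 1) / (real v * (real v - 1)) \<le> real s * (real s - 1) / (real v ^ 2 / 2)"
  proof (rule divide_left_mono)
    have vv: "real v * (real v - 1) > 0" using v2 by simp
    then show "0 < real v * (real v - 1) * (real v ^ 2 / 2)" using dpos by (rule mult_pos_pos)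
  qed (use d s1 s2 in auto)
  also have "\<dots> < (2 * x^4 * real v ^ 2) / (real v ^ 2 / 2)" using c dpos by (intro divide_strict_right_mono)
  also have "\<dots> = 4 * x^4" using v2 by (simp add: field_simps)
  finally show ?thesis .
qed

theorem lemma6p2:
  fixes k r :: nat and H :: "nat \<Rightarrow> 'b graph"
  assumes "r \<ge> 2" and "k \<ge> 1"
    and "\<forall>i\<in>{1..r}. wf_graph (H i)"
  shows "(Bfam k r H :: 'a graph set) \<subseteq> Bfam' k r H"
proof
  fix G :: "'a graph" assume "G \<in> Bfam k r H"
  then obtain c where wf: "wf_graph G" and cr: "\<forall>e\<in>E G. c e \<in> {1..r}"
    and nj: "\<forall>i\<in>{1..r}. \<not> janson (V G) (Ihg (H i) (colour_class G (E G) c i) G) (pconst k r) (pconst k r * vnum G)"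
    unfolding Bfam_def by blast
  define p where "p = pconst k r"
  have p: "p > 0" using assms by (simp add: p_def pconst_def)
  define Vs where "Vs = V G"
  have fV: "finite Vs" using wf by (simp add: wf_graph_def Vs_def)
  define v where "v = card Vs"
  have vn: "vnum G = real v" by (simp add: vnum_def v_def Vs_def)
  define x where "x = real r powr (-50/3)"
  note xf = x_facts[OF assms(1), folded x_def]
  define R' where "R' = 2 powr (-9) / real r * delta r * p * vnum G"
  have cS: "\<forall>e\<in>E (induced G S). c e \<in> {1..r}" for S using cr unfolding induced_def E_def by auto
  show "G \<in> Bfam' k r H"
  proof (rule ccontr)
    assume nB: "G \<notin> Bfam' k r H"
    have nB': "\<exists>i\<in>{1..r}. janson Vs (hg_restrict (Ihg (H i) (colour_class G (E G) c i) G) S) p R'"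
      if "S \<subseteq> Vs" "real (card S) \<ge> x^2 * real v" for S
    proof -
      have "\<not> (\<forall>i\<in>{1..r}. \<not> janson (V G)
           (hg_restrict (Ihg (H i) (colour_class G (E (induced G S)) c i) G) S)
           (pconst k r) (2 powr (-9) / real r * delta r * pconst k r * vnum G))"
      proof
        assume H: "\<forall>i\<in>{1..r}. \<not> janson (V G)
           (hg_restrict (Ihg (H i) (colour_class G (E (induced G S)) c i) G) S)
           (pconst k r) (2 powr (-9) / real r * delta r * pconst k r * vnum G)"
        have "real (card S) \<ge> delta r powr (2/3) * vnum G" using that xf(3) by (simp add: vn)
        then have "G \<in> Bfam' k r H" unfolding Bfam'_def using wf that(1) cS[of S] H
          unfolding Vs_def by blast
        then show False using nB by blast
      qed
      then obtain i where "i \<in> {1..r}" "janson (V G)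
           (hg_restrict (Ihg (H i) (colour_class G (E (induced G S)) c i) G) S)
           (pconst k r) (2 powr (-9) / real r * delta r * pconst k r * vnum G)" by blast
      then show ?thesis using restr_colour[of S G "H i" c i] that
        by (auto simp: Vs_def p_def R'_def)
    qed
    have v0: "v \<noteq> 0"
    proof
      assume "v = 0"
      then obtain i where "janson Vs (hg_restrict (Ihg (H i) (colour_class G (E G) c i) G) {}) p R'"
        using nB'[of "{}"] by auto
      moreover have "R' \<le> 0" using `v = 0` by (simp add: R'_def vn)
      ultimately show False using not_janson_nonpos[OF p] by blast
    qed
    define s where "s = nat \<lceil>x^2 * real v\<rceil>"
    have xv0: "x^2 * real v \<ge> 0" by simp
    have s_ge: "real s \<ge> x^2 * real v" unfolding s_def using xv0 by linarith
    have s_lt: "real s < x^2 * real v + 1" unfolding s_def using xv0 by linarith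
    have "x^2 * real v \<le> real v" using xf(4) by (simp add: mult_left_le_one_le)
    then have sv: "s \<le> v" unfolding s_def by (simp add: nat_le_iff ceiling_le_iff)
    define F where "F = {S. S \<subseteq> Vs \<and> card S = s}"
    define J where "J i = Ihg (H i) (colour_class G (E G) c i) G" for i
    define A where "A i = {S\<in>F. janson Vs (hg_restrict (J i) S) p R'}" for i
    have cover: "F \<subseteq> (\<Union>i\<in>{1..r}. A i)"
      using nB' s_ge unfolding F_def A_def J_def by fastforce
    have fF: "finite F" using fV unfolding F_def by simp
    have cF: "card F = v choose s" unfolding F_def v_def using fV by (simp add: n_subsets)
    have "card F \<le> card (\<Union>i\<in>{1..r}. A i)"
      by (rule card_mono[OF _ cover]) (use fF in \<open>auto simp: A_def\<close>)
    also have "\<dots> \<le> (\<Sum>i\<in>{1..r}. card (A i))" by (rule card_UN_le) simp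
    finally have cFA: "real (v choose s) \<le> (\<Sum>i\<in>{1..r}. real (card (A i)))" using cF
      by (metis of_nat_le_iff of_nat_sum)
    define M where "M = real (v choose s) * (real s * (real s - 1)) / (real v * (real v - 1))"
    have M0: "M \<ge> 0" unfolding M_def
    proof (cases "s \<ge> 1")
      case True
      then have "real s - 1 \<ge> 0" "real v - 1 \<ge> 0" using sv by auto
      then show "0 \<le> real (v choose s) * (real s * (real s - 1)) / (real v * (real v - 1))" by simp
    next
      case False then have "s = 0" by simp
      then show "0 \<le> real (v choose s) * (real s * (real s - 1)) / (real v * (real v - 1))" by simp
    qed
    have Rpos: "p * vnum G > 0" using p v0 by (simp add: vn)
    have each: "real (card (A i)) * R' \<le> M * (p * vnum G)" if "i \<in> {1..r}" for i
    proof (rule count_bound[OF fV _ p Rpos])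
      show "J i \<subseteq> Pow Vs" unfolding J_def Ihg_def Vs_def by auto
      show "\<not> janson Vs (J i) p (p * vnum G)" using nj that by (simp add: J_def Vs_def p_def)
      show "A i \<subseteq> Pow Vs" unfolding A_def F_def by auto
      show "\<forall>S\<in>A i. janson Vs (hg_restrict (J i) S) p R'" unfolding A_def by auto
      show "\<forall>L. L \<subseteq> Vs \<and> 2 \<le> card L \<longrightarrow> real (card {S \<in> A i. L \<subseteq> S}) \<le> M"
      proof (intro allI impI)
        fix L assume L: "L \<subseteq> Vs \<and> 2 \<le> card L"
        have "card {S \<in> A i. L \<subseteq> S} \<le> card {S. S \<subseteq> Vs \<and> card S = s \<and> L \<subseteq> S}"
          by (rule card_mono) (use fV in \<open>auto simp: A_def F_def\<close>)
        then have "real (card {S \<in> A i. L \<subseteq> S}) \<le> real (card {S. S \<subseteq> Vs \<and> card S = s \<and> L \<subseteq> S})"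
          by simp
        also have "\<dots> \<le> M" unfolding M_def v_def using count_L[OF fV _ _ sv[unfolded v_def]] L by auto
        finally show "real (card {S \<in> A i. L \<subseteq> S}) \<le> M" .
      qed
    qed (rule M0)
    have "real (v choose s) * R' \<le> (\<Sum>i\<in>{1..r}. real (card (A i))) * R'"
      using cFA by (rule mult_right_mono) (use xf(1) p in \<open>simp add: R'_def vn xf(2)\<close>)
    also have "\<dots> = (\<Sum>i\<in>{1..r}. real (card (A i)) * R')" by (simp add: sum_distrib_right)
    also have "\<dots> \<le> (\<Sum>i\<in>{1..r}. M * (p * vnum G))" by (rule sum_mono) (use each in auto)
    also have "\<dots> = real r * M * (p * real v)" by (simp add: vn)
    finally have main: "real (v choose s) * R' \<le> real r * M * (p * real v)" .
    have C0: "real (v choose s) > 0" using sv by simp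
    have R'eq: "R' = (2 powr (-9) / real r * x^3) * (p * real v)" by (simp add: R'_def xf(2) vn)
    have pv: "p * real v > 0" using Rpos vn by simp
    have "(real (v choose s) * (2 powr (-9) / real r * x^3)) * (p * real v) \<le> (real r * M) * (p * real v)"
      using main unfolding R'eq by (simp add: mult.assoc)
    then have "real (v choose s) * (2 powr (-9) / real r * x^3) \<le> real r * M"
      using pv by (simp only: mult_le_cancel_right_pos)
    define \<rho> where "\<rho> = real s * (real s - 1) / (real v * (real v - 1))"
    have M\<rho>: "M = real (v choose s) * \<rho>" unfolding M_def \<rho>_def by simp
    have rr: "real r > 0" using assms by simp
    have ineq: "2 powr (-9) * x^3 \<le> real r ^ 2 * \<rho>"
    proof -
      have e1: "real (v choose s) * (2 powr (-9) / real r * x^3) = (real (v choose s) * (2 powr (-9) * x^3)) / real r"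
        by simp
      have "(real (v choose s) * (2 powr (-9) * x^3)) / real r \<le> real r * M"
        using \<open>real (v choose s) * (2 powr (-9) / real r * x^3) \<le> real r * M\<close> unfolding e1 .
      then have "real (v choose s) * (2 powr (-9) * x^3) \<le> real r * M * real r"
        using rr by (simp only: pos_divide_le_eq)
      also have "\<dots> = real (v choose s) * (real r ^ 2 * \<rho>)"
        unfolding M\<rho> by (simp add: power2_eq_square mult_ac)
      finally have "real (v choose s) * (2 powr (-9) * x^3) \<le> real (v choose s) * (real r ^ 2 * \<rho>)" .
      then show ?thesis using C0 by simp
    qed
    have x0: "x > 0" using xf(1) .
    show False
    proof (cases "s \<ge> 2")
      case True
      have "\<rho> < 4 * x^4" unfolding \<rho>_def by (rule rho_bound[OF True sv x0 s_lt])
      then have "real r^2 * \<rho> < real r^2 * (4 * x^4)" using rr by simp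
      with ineq have "2 powr (-9) * x^3 < real r^2 * (4 * x^4)" by linarith
      moreover have "real r^2 * (4 * x^4) = x^3 * (4 * (real r^2 * x))"
        by (simp add: eval_nat_numeral mult_ac)
      ultimately have "x^3 * (2 powr (-9)) < x^3 * (4 * (real r^2 * x))" by (simp add: mult.commute)
      then have lt: "2 powr (-9) < 4 * (real r^2 * x)" using x0 by (simp add: mult_less_cancel_left_pos)
      have "(2::real) powr (-9) = 1 / 2 powr 9" by (simp add: powr_minus_divide)
      also have "(2::real) powr 9 = 512" by (simp add: powr_numeral)
      finally have "1 / 512 < 4 * (real r^2 * x)" using lt by simp
      then have "1 < real r^2 * 2^11 * x" by simp
      then show False using xf(5) by simp
    next
      case False
      then have "\<rho> = 0" unfolding \<rho>_def by (cases s) auto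
      moreover have "2 powr (-9) * x^3 > 0" using x0 by simp
      ultimately show False using ineq by simp
    qed
  qed
qed

end
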